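(* For every integer $n\ge 0$, $c_1(n)$ is odd if and only if $n=j(j+1)/2$ for some integer $j\ge 0$.
   Context: A partition of $n\ge 0$ is a finite multiset of positive integers (its parts) summing to $n$; the empty partition is the unique partition of $0$. For $n\ge 0$, $c_1(n)$ denotes the number of partitions $\lambda$ of $n$ such that either (a) all parts of $\lambda$ are distinct, or (b) there is an integer $j\ge 1$ such that each of the integers $1,2,\dots,2j-1$ appears in $\lambda$ at least twice, and every integer greater than $2j$ appears in $\lambda$ at most once (the integer $2j$ may appear any number of times, including zero). *)

theory Defs
  imports Main "HOL-Library.Multiset"
begin

definition is_partition :: "nat \<Rightarrow> nat multiset \<Rightarrow> bool" where
  "is_partition n p \<longleftrightarrow> (\<forall>x \<in># p. x > 0) \<and> sum_mset p = n"

definition partitions :: "nat \<Rightarrow> nat multiset set" where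
  "partitions n = {p. is_partition n p}"

definition distinct_parts :: "nat multiset \<Rightarrow> bool" where
  "distinct_parts p \<longleftrightarrow> (\<forall>x. count p x \<le> 1)"

definition cond_b :: "nat multiset \<Rightarrow> bool" where
  "cond_b p \<longleftrightarrow> (\<exists>j::nat. j \<ge> 1 \<and>
      (\<forall>i. 1 \<le> i \<and> i \<le> 2*j - 1 \<longrightarrow> count p i \<ge> 2) \<and>
      (\<forall>i. i > 2*j \<longrightarrow> count p i \<le> 1))"

definition c1 :: "nat \<Rightarrow> nat" where
  "c1 n = card {p \<in> partitions n. distinct_parts p \<or> cond_b p}"

end

theory Submission
  imports Defs "HOL-Library.Z2" "HOL-Computational_Algebra.Formal_Power_Series"
begin

unbundle fps_syntax




lemma bit_add_self [simp]: "(x::bit) + x = 0"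
  by (cases x) simp_all

lemma fps_add_self [simp]: "(f::bit fps) + f = 0"
  by (rule fps_ext) (simp only: fps_add_nth fps_zero_nth bit_add_self)

lemma fps_minus_eq_plus: "(f::bit fps) - g = f + g"
  by (simp add: fps_eq_iff)

abbreviation XX :: "bit fps" where "XX \<equiv> fps_X"

definition P :: "nat \<Rightarrow> bit fps" where
  "P k = (\<Prod>i\<in>{1..k}. (1 + XX^i))"

definition tri :: "nat \<Rightarrow> nat" where "tri k = k * (k+1) div 2"

lemma tri_Suc: "tri (Suc k) = tri k + Suc k"
  unfolding tri_def by (induct k) auto

lemma tri_ge: "k \<le> tri k"
  by (induct k) (auto simp: tri_Suc tri_def)

lemma P_0 [simp]: "P 0 = 1" by (simp add: P_def)
lemma P_Suc: "P (Suc k) = P k * (1 + XX^Suc k)"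
  by (simp add: P_def)
lemma P_nth0 [simp]: "P k $ 0 = 1"
  by (induct k) (simp_all add: P_Suc)
lemma P_nz [simp]: "P k \<noteq> 0"
  using P_nth0[of k] by (metis fps_zero_nth zero_neq_one)

definition iP :: "nat \<Rightarrow> bit fps" where "iP k = inverse (P k)"

lemma iP_P [simp]: "iP k * P k = 1" unfolding iP_def by (rule inverse_mult_eq_1) simp
lemma P_iP [simp]: "P k * iP k = 1" unfolding iP_def by (rule inverse_mult_eq_1') simp
lemma iP_Suc: "iP (Suc k) = iP k * inverse (1 + XX^Suc k)"
  by (simp add: iP_def P_Suc fps_inverse_mult)

fun e :: "nat \<Rightarrow> nat \<Rightarrow> bit fps" where
  "e L 0 = 1"
| "e 0 (Suc m) = 0"
| "e (Suc L) (Suc m) = e L (Suc m) + XX^(Suc L) * e L m"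

lemma e_zero: "L < m \<Longrightarrow> e L m = 0"
proof (induct L arbitrary: m)
  case 0 then show ?case by (cases m) auto
next
  case (Suc L) then show ?case by (cases m) auto
qed

lemma E1: "(\<Prod>i\<in>{1..L}. (1 + z * XX^i)) = (\<Sum>m\<le>L. z^m * e L m)"
proof (induct L)
  case 0 then show ?case by simp
next
  case (Suc L)
  have "(\<Prod>i\<in>{1..Suc L}. (1 + z * XX^i)) = (\<Sum>m\<le>L. z^m * e L m) * (1 + z * XX^Suc L)"
    using Suc by simp
  also have "\<dots> = (\<Sum>m\<le>L. z^m * e L m) + (\<Sum>m\<le>L. z^Suc m * (XX^Suc L * e L m))"
    by (simp add: sum_distrib_right sum_distrib_left algebra_simps sum.distrib)
  also have "(\<Sum>m\<le>L. z^m * e L m) = 1 + (\<Sum>m\<le>L. z^Suc m * e L (Suc m))"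
  proof -
    have "(\<Sum>m\<le>Suc L. z^m * e L m) = 1 + (\<Sum>m\<le>L. z^Suc m * e L (Suc m))"
      by (subst sum.atMost_Suc_shift) simp
    moreover have "(\<Sum>m\<le>Suc L. z^m * e L m) = (\<Sum>m\<le>L. z^m * e L m)"
      by (simp add: e_zero)
    ultimately show ?thesis by simp
  qed
  finally show ?case
    by (subst sum.atMost_Suc_shift) (simp add: algebra_simps sum.distrib)
qed

lemma E2: "e (Suc L) (Suc m) = XX^(Suc m) * (e L (Suc m) + e L m)"
proof (induct L arbitrary: m)
  case 0 then show ?case by (cases m) auto
next
  case (Suc L)
  show ?case
  proof (cases m)
    case 0
    have "e (Suc (Suc L)) (Suc 0) = e (Suc L) (Suc 0) + XX^(Suc (Suc L))" by simp
    also have "\<dots> = XX * (e L (Suc 0) + 1) + XX^(Suc (Suc L))" using Suc[of 0] by simp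
    also have "\<dots> = XX * (e L (Suc 0) + XX^(Suc L) + 1)" by (simp add: algebra_simps)
    also have "\<dots> = XX * (e (Suc L) (Suc 0) + e (Suc L) 0)" by simp
    finally show ?thesis using 0 by simp
  next
    case (Suc m')
    have "e (Suc (Suc L)) (Suc (Suc m')) = e (Suc L) (Suc (Suc m')) + XX^(Suc (Suc L)) * e (Suc L) (Suc m')"
      by simp
    also have "\<dots> = XX^(Suc (Suc m')) * (e L (Suc (Suc m')) + e L (Suc m'))
        + XX^(Suc (Suc L)) * (XX^(Suc m') * (e L (Suc m') + e L m'))"
      using Suc.hyps[of "Suc m'"] Suc.hyps[of m'] by simp
    also have "\<dots> = XX^(Suc (Suc m')) * ((e L (Suc (Suc m')) + XX^(Suc L) * e L (Suc m'))
        + (e L (Suc m') + XX^(Suc L) * e L m'))"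
      by (simp add: algebra_simps power_add)
    also have "\<dots> = XX^(Suc (Suc m')) * (e (Suc L) (Suc (Suc m')) + e (Suc L) (Suc m'))"
      by simp
    finally show ?thesis using Suc by simp
  qed
qed

lemma char2_swap: "(a::bit fps) + b = c + d \<Longrightarrow> a + c = b + d"
proof -
  assume h: "a + b = c + d"
  show ?thesis
  proof (rule fps_ext)
    fix n
    have "a$n + b$n = c$n + d$n" using h by (metis fps_add_nth)
    then show "(a + c) $ n = (b + d) $ n"
      by (cases "a$n"; cases "b$n"; cases "c$n"; cases "d$n") simp_all
  qed
qed

lemma E3: "(1 + XX^Suc m) * e L (Suc m) = (XX^Suc m + XX^Suc L) * e L m"
proof -
  have "e L (Suc m) + XX^Suc L * e L m = XX^Suc m * e L (Suc m) + XX^Suc m * e L m"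
    using E2[of L m] by (simp add: algebra_simps)
  then have "e L (Suc m) + XX^Suc m * e L (Suc m) = XX^Suc L * e L m + XX^Suc m * e L m"
    by (rule char2_swap)
  then show ?thesis by (simp add: algebra_simps)
qed

definition eqm :: "nat \<Rightarrow> bit fps \<Rightarrow> bit fps \<Rightarrow> bool" where
  "eqm n f g \<longleftrightarrow> (\<forall>m\<le>n. f $ m = g $ m)"

lemma eqm_refl [simp]: "eqm n f f" by (simp add: eqm_def)
lemma eqm_sym: "eqm n f g \<Longrightarrow> eqm n g f" by (simp add: eqm_def)
lemma eqm_trans: "eqm n f g \<Longrightarrow> eqm n g h \<Longrightarrow> eqm n f h" by (simp add: eqm_def)
lemma eqm_mono: "n' \<le> n \<Longrightarrow> eqm n f g \<Longrightarrow> eqm n' f g" by (simp add: eqm_def)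
lemma eqm_add: "eqm n f f' \<Longrightarrow> eqm n g g' \<Longrightarrow> eqm n (f + g) (f' + g')"
  by (simp add: eqm_def)
lemma eqm_mult: "eqm n f f' \<Longrightarrow> eqm n g g' \<Longrightarrow> eqm n (f * g) (f' * g')"
  unfolding eqm_def fps_mult_nth by (auto intro!: sum.cong)
lemma eqm_sum: "(\<And>i. i \<in> A \<Longrightarrow> eqm n (f i) (g i)) \<Longrightarrow> eqm n (sum f A) (sum g A)"
  unfolding eqm_def fps_sum_nth by (auto intro!: sum.cong)
lemma eqm_Xpow: "n < a \<Longrightarrow> eqm n (XX^a * f) 0"
  unfolding eqm_def fps_X_power_mult_nth by auto
lemma eqm_inverse:
  assumes "f $ 0 \<noteq> 0" "eqm n f g"
  shows "eqm n (inverse f) (inverse g)"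
proof -
  have g0: "g $ 0 \<noteq> 0" using assms by (simp add: eqm_def)
  have e1: "inverse f = (inverse f * g) * inverse g"
    using inverse_mult_eq_1'[OF g0] by (metis mult.assoc mult_1_right)
  have inv: "inverse f * f = 1" using assms(1) by (rule inverse_mult_eq_1)
  have "eqm n ((inverse f * g) * inverse g) ((inverse f * f) * inverse g)"
    by (intro eqm_mult eqm_sym[OF assms(2)] eqm_refl)
  then have "eqm n (inverse f) (1 * inverse g)" by (simp only: e1[symmetric] inv)
  then show ?thesis by simp
qed

lemma E4: "eqm L (e L m) (XX^tri m * iP m)"
proof (induct m)
  case 0 then show ?case by (simp add: tri_def iP_def)
next
  case (Suc m)
  have inv: "inverse (1 + XX^Suc m) * (1 + XX^Suc m) = 1"
    by (rule inverse_mult_eq_1) simp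
  have "e L (Suc m) = inverse (1 + XX^Suc m) * ((1 + XX^Suc m) * e L (Suc m))"
    using inv by (metis mult.assoc mult_1)
  also have "\<dots> = inverse (1 + XX^Suc m) * ((XX^Suc m + XX^Suc L) * e L m)"
    by (simp only: E3)
  finally have eq: "e L (Suc m) = inverse (1 + XX^Suc m) * ((XX^Suc m + XX^Suc L) * e L m)" .
  have "eqm L (inverse (1 + XX^Suc m) * ((XX^Suc m + XX^Suc L) * e L m))
     (inverse (1 + XX^Suc m) * (XX^Suc m * (XX^tri m * iP m) + 0))"
  proof (intro eqm_mult eqm_refl)
    show "eqm L ((XX ^ Suc m + XX ^ Suc L) * e L m) (XX ^ Suc m * (XX ^ tri m * iP m) + 0)"
      unfolding distrib_right
      by (intro eqm_add eqm_mult eqm_refl Suc eqm_Xpow) simp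
  qed
  moreover have "inverse (1 + XX^Suc m) * (XX^Suc m * (XX^tri m * iP m) + 0) = XX^tri (Suc m) * iP (Suc m)"
    by (simp add: tri_Suc iP_Suc power_add algebra_simps)
  ultimately show ?case using eq by simp
qed

lemma two_fps_bit [simp]: "(2::bit fps) = 0"
  by (simp only: one_add_one[symmetric] fps_add_self)

lemma ring_E5: "(a::'a::comm_ring_1) * u * (1 + v) + (u*v) * a * (1 + u) = a * u * (1 + u*v) + 2 * (a * (u * v))"
  by (simp add: distrib_left distrib_right mult_2 mult_ac add_ac)

lemma char2_E5: "u * v = w \<Longrightarrow> (a::bit fps) * u * (1 + v) + w * a * (1 + u) = a * u * (1 + w)"
  using ring_E5[of a u v] by simp

lemma E5: "k \<le> s \<Longrightarrow> e s k * P k * P (s - k) = XX^tri k * P s"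
proof (induct s arbitrary: k)
  case 0 then show ?case by (simp add: tri_def)
next
  case (Suc s)
  show ?case
  proof (cases k)
    case 0 then show ?thesis by (simp add: tri_def)
  next
    case (Suc k')
    show ?thesis
    proof (cases "k' = s")
      case True
      have "e s s * P s * P 0 = XX^tri s * P s" using Suc.hyps[of s] by simp
      then have ess: "e s s = XX^tri s" by simp
      have "e (Suc s) (Suc s) = XX^Suc s * XX^tri s" by (simp add: e_zero ess)
      also have "\<dots> = XX^tri (Suc s)" by (simp add: tri_Suc power_add mult.commute)
      finally have "e (Suc s) (Suc s) = XX^tri (Suc s)" .
      then show ?thesis using True Suc by (simp only:) simp
    next
      case False
      have lt: "k' < s" using Suc.prems Suc False by simp
      then obtain d where sd: "s = Suc (k' + d)" using less_imp_Suc_add by blast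
      have d1: "s - Suc k' = d" and d2: "s - k' = Suc d" and sk: "Suc s - Suc k' = Suc d"
        using sd Suc by simp_all
      have le1: "Suc k' \<le> s" and le2: "k' \<le> s" using lt by simp_all
      have ih1: "e s (Suc k') * P (Suc k') * P d = XX^tri (Suc k') * P s"
        using Suc.hyps[OF le1] unfolding d1 .
      have ih2: "e s k' * P k' * P (Suc d) = XX^tri k' * P s"
        using Suc.hyps[OF le2] unfolding d2 .
      have "e (Suc s) k * P k * P (Suc s - k)
          = (e s (Suc k') + XX^Suc s * e s k') * P (Suc k') * P (Suc d)"
        by (simp only: sk Suc e.simps)
      also have "\<dots> = (e s (Suc k') * P (Suc k') * P d) * (1 + XX^Suc d)
                     + XX^Suc s * (e s k' * P k' * P (Suc d)) * (1 + XX^Suc k')"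
        by (simp only: distrib_right P_Suc[of d] P_Suc[of k']) (simp add: mult_ac)
      also have "\<dots> = XX^tri (Suc k') * P s * (1 + XX^Suc d) + XX^Suc s * (XX^tri k' * P s) * (1 + XX^Suc k')"
        by (simp only: ih1 ih2)
      also have "\<dots> = (XX^tri k' * P s) * XX^Suc k' * (1 + XX^Suc d) + XX^Suc s * (XX^tri k' * P s) * (1 + XX^Suc k')"
        by (simp add: tri_Suc power_add mult_ac)
      also have "\<dots> = (XX^tri k' * P s) * XX^Suc k' * (1 + XX^Suc s)"
        by (rule char2_E5) (simp add: sd flip: power_add)
      also have "\<dots> = XX^tri k * P (Suc s)"
        by (simp only: Suc tri_Suc P_Suc power_add) (simp add: mult_ac)
      finally show ?thesis .
    qed
  qed
qed

lemma E6: "(\<Sum>k\<le>s. e s k) = P s"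
  using E1[where L=s and z=1] by (simp add: P_def)

lemma Dlem: "(\<Sum>k\<le>s. XX^tri k * iP k * iP (s - k)) = 1"
proof -
  have "XX^tri k * iP k * iP (s - k) = e s k * iP s" if "k \<le> s" for k
  proof -
    have "e s k * P k * P (s - k) * iP s = XX^tri k * (P s * iP s)"
      using E5[OF that] by (simp only: mult.assoc)
    then have h: "XX^tri k = e s k * P k * P (s - k) * iP s" by simp
    have "XX^tri k * iP k * iP (s - k) = e s k * iP s * (P k * iP k) * (P (s - k) * iP (s - k))"
      by (subst h) (simp only: mult_ac)
    then show ?thesis by simp
  qed
  then have "(\<Sum>k\<le>s. XX^tri k * iP k * iP (s - k)) = (\<Sum>k\<le>s. e s k) * iP s"
    by (simp add: sum_distrib_right)
  then show ?thesis by (simp add: E6)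
qed




lemma tri_0 [simp]: "tri 0 = 0" by (simp add: tri_def)

lemma tri_add: "tri (a + b) = tri a + tri b + a * b"
  by (induct b) (simp_all add: tri_Suc)

lemma tri_mono: "a < b \<Longrightarrow> tri a < tri b"
proof (induct b)
  case 0 then show ?case by simp
next
  case (Suc b) then show ?case by (cases "a = b") (auto simp: tri_Suc)
qed

lemma tri_inj: "tri a = tri b \<longleftrightarrow> a = b"
  by (metis less_irrefl nat_neq_iff tri_mono)

declare eqm_trans [trans]

definition tail :: "nat \<Rightarrow> nat \<Rightarrow> bit fps" where
  "tail N k = (\<Prod>i\<in>{Suc k..N}. (1 + XX^i))"

lemma tailE: "k \<le> N \<Longrightarrow> tail N k = (\<Sum>m\<le>N-k. XX^(k*m) * e (N-k) m)"
proof -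
  assume kN: "k \<le> N"
  have "tail N k = (\<Prod>i\<in>{1+k..(N-k)+k}. (1 + XX^i))"
    unfolding tail_def using kN by simp
  also have "\<dots> = (\<Prod>i\<in>{1..N-k}. (1 + XX^k * XX^i))"
    by (subst prod.shift_bounds_cl_nat_ivl) (simp add: power_add mult.commute)
  also have "\<dots> = (\<Sum>m\<le>N-k. (XX^k)^m * e (N-k) m)"
    by (rule E1)
  finally show ?thesis by (simp add: power_mult)
qed

lemma eqm_sum_drop_gen:
  fixes L c :: nat
  shows "c \<le> L \<Longrightarrow> (\<forall>m. c < m \<and> m \<le> L \<longrightarrow> eqm n (f m) 0) \<Longrightarrow> eqm n (\<Sum>m\<le>L. f m) (\<Sum>m\<le>c. f m)"
proof (induct L)
  case 0 then show ?case by simp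
next
  case (Suc L)
  show ?case
  proof (cases "c = Suc L")
    case True then show ?thesis by simp
  next
    case False
    then have "c \<le> L" using Suc by simp
    then have "eqm n (\<Sum>m\<le>L. f m) (\<Sum>m\<le>c. f m)" using Suc by simp
    moreover have "eqm n (f (Suc L)) 0" using Suc \<open>c \<le> L\<close> by simp
    ultimately have "eqm n ((\<Sum>m\<le>L. f m) + f (Suc L)) ((\<Sum>m\<le>c. f m) + 0)"
      by (rule eqm_add)
    then show ?thesis by simp
  qed
qed

lemma eqm_sum_drop:
  assumes "n \<le> L" "\<And>m. n < m \<Longrightarrow> m \<le> L \<Longrightarrow> eqm n (f m) 0"
  shows "eqm n (\<Sum>m\<le>L. f m) (\<Sum>m\<le>n. f m)"
  using eqm_sum_drop_gen[of n L n f] assms by blast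

lemma tail_approx:
  assumes "k \<le> n" "2*n \<le> N"
  shows "eqm n (tail N k) (\<Sum>m\<le>n. XX^(k*m + tri m) * iP m)"
proof -
  have kN: "k \<le> N" and nL: "n \<le> N - k" using assms by simp_all
  have "eqm n (tail N k) (\<Sum>m\<le>N-k. XX^(k*m) * (XX^tri m * iP m))"
    unfolding tailE[OF kN]
    by (intro eqm_sum eqm_mult eqm_refl eqm_mono[OF nL E4])
  also have "eqm n (\<Sum>m\<le>N-k. XX^(k*m) * (XX^tri m * iP m)) (\<Sum>m\<le>n. XX^(k*m) * (XX^tri m * iP m))"
  proof (rule eqm_sum_drop[OF nL])
    fix m assume "n < m" "m \<le> N - k"
    then have "n < k*m + tri m" using tri_ge[of m] by linarith
    then show "eqm n (XX^(k*m) * (XX^tri m * iP m)) 0"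
      using eqm_Xpow[of n "k*m + tri m" "iP m"] by (simp add: power_add mult.assoc)
  qed
  finally show ?thesis by (simp add: power_add mult.assoc)
qed


lemma char2_move: "(x::bit fps) = y + z \<Longrightarrow> y = x + z"
proof -
  assume h: "x = y + z"
  show ?thesis
  proof (rule fps_ext)
    fix n
    have "x$n = y$n + z$n" using h by (metis fps_add_nth)
    then show "y $ n = (x + z) $ n"
      by (cases "x$n"; cases "y$n"; cases "z$n") simp_all
  qed
qed

lemma sq_char2: "(1 + a) * (1 + a) = 1 + (a * a :: bit fps)"
proof -
  have "(1 + a) * (1 + a) = 1 + a * a + (a + a)" by (simp add: algebra_simps)
  then show ?thesis by (simp only: fps_add_self add_0_right)
qed

lemma iP_0 [simp]: "iP 0 = 1" by (simp add: iP_def)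

lemma tail_0: "tail N 0 = P N"
  by (simp add: tail_def P_def)

lemma tail_step: "Suc k \<le> N \<Longrightarrow> tail N k = (1 + XX^Suc k) * tail N (Suc k)"
proof -
  assume h: "Suc k \<le> N"
  have "{Suc k..N} = insert (Suc k) {Suc (Suc k)..N}" using h by auto
  then show ?thesis unfolding tail_def by simp
qed

lemma iP_step: "iP k = iP (Suc k) * (1 + XX^Suc k)"
proof -
  have "inverse (1 + XX^Suc k) * (1 + XX^Suc k) = 1" by (rule inverse_mult_eq_1) simp
  then show ?thesis by (simp add: iP_Suc mult.assoc)
qed

definition V :: "nat \<Rightarrow> nat \<Rightarrow> bit fps" where
  "V N k = XX^(2 * tri k) * tail N k * iP k"

definition Fsum :: "nat \<Rightarrow> nat \<Rightarrow> bit fps" where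
  "Fsum n N = P N + (\<Sum>i<n. XX^(2 * tri (2*i+1)) * tail N (2*i+2) * iP (2*i+2))"

lemma pair_lemma:
  assumes "2*i+2 \<le> N"
  shows "XX^(2 * tri (2*i+1)) * tail N (2*i+2) * iP (2*i+2) = V N (2*i+1) + V N (2*i+2)"
proof (rule char2_move)
  let ?a = "XX^(2*i+2)"
  have t: "tail N (2*i+1) = (1 + ?a) * tail N (2*i+2)"
    using tail_step[of "2*i+1" N] assms by simp
  have p: "iP (2*i+1) = iP (2*i+2) * (1 + ?a)"
    using iP_step[of "2*i+1"] by simp
  have ex: "2 * tri (2*i+2) = 2 * tri (2*i+1) + (2*i+2) + (2*i+2)"
    using tri_Suc[of "2*i+1"] by simp
  have aa: "?a * ?a = XX^((2*i+2)+(2*i+2))" by (simp only: power_add)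
  have "V N (2*i+1) = XX^(2 * tri (2*i+1)) * ((1 + ?a) * (1 + ?a)) * tail N (2*i+2) * iP (2*i+2)"
    unfolding V_def t p by (simp only: mult_ac)
  also have "\<dots> = XX^(2 * tri (2*i+1)) * tail N (2*i+2) * iP (2*i+2) + V N (2*i+2)"
    unfolding sq_char2 V_def ex
    by (simp only: distrib_left distrib_right mult_1_right mult_1_left mult_ac power_add)
  finally show "V N (2*i+1) = XX^(2 * tri (2*i+1)) * tail N (2*i+2) * iP (2*i+2) + V N (2*i+2)" .
qed

lemma S2: "2*n \<le> N \<Longrightarrow> Fsum n N = (\<Sum>k\<le>2*n. V N k)"
proof (induct n)
  case 0 then show ?case by (simp add: Fsum_def V_def tail_0 tri_def)
next
  case (Suc n)
  have "Fsum (Suc n) N = Fsum n N + XX^(2 * tri (2*n+1)) * tail N (2*n+2) * iP (2*n+2)"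
    by (simp add: Fsum_def add.assoc)
  also have "\<dots> = (\<Sum>k\<le>2*n. V N k) + (V N (2*n+1) + V N (2*n+2))"
    using Suc pair_lemma[of n N] by simp
  also have "\<dots> = (\<Sum>k\<le>2*Suc n. V N k)"
    by (simp add: add.assoc)
  finally show ?case .
qed


definition W :: "nat \<Rightarrow> nat \<Rightarrow> bit fps" where
  "W k m = XX^(2*tri k + k*m + tri m) * (iP k * iP m)"

lemma S34:
  assumes "2*n \<le> N"
  shows "eqm n (\<Sum>k\<le>2*n. V N k) (\<Sum>k\<le>n. \<Sum>m\<le>n. W k m)"
proof -
  have "eqm n (\<Sum>k\<le>2*n. V N k) (\<Sum>k\<le>n. V N k)"
  proof (rule eqm_sum_drop)
    fix k assume "n < k" "k \<le> 2*n"
    then have "n < 2 * tri k" using tri_ge[of k] by linarith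
    then show "eqm n (V N k) 0" unfolding V_def mult.assoc by (rule eqm_Xpow)
  qed simp
  also have "eqm n (\<Sum>k\<le>n. V N k) (\<Sum>k\<le>n. \<Sum>m\<le>n. W k m)"
  proof (rule eqm_sum)
    fix k assume "k \<in> {..n}"
    then have kn: "k \<le> n" by simp
    have "eqm n (V N k) (XX^(2 * tri k) * (\<Sum>m\<le>n. XX^(k*m + tri m) * iP m) * iP k)"
      unfolding V_def by (intro eqm_mult eqm_refl tail_approx kn assms)
    also have "XX^(2 * tri k) * (\<Sum>m\<le>n. XX^(k*m + tri m) * iP m) * iP k = (\<Sum>m\<le>n. W k m)"
      unfolding W_def sum_distrib_left sum_distrib_right
      by (rule sum.cong) (simp_all only: power_add mult_ac)
    finally show "eqm n (V N k) (\<Sum>m\<le>n. W k m)" .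
  qed
  finally show ?thesis .
qed

lemma W_diag: "k \<le> s \<Longrightarrow> W k (s - k) = XX^tri s * (XX^tri k * iP k * iP (s - k))"
proof -
  assume "k \<le> s"
  then obtain d where sd: "s = k + d" using le_iff_add by blast
  have "2*tri k + k*d + tri d = tri s + tri k" using sd tri_add[of k d] by simp
  then show ?thesis using sd unfolding W_def by (simp add: power_add[symmetric] mult_ac)
qed

lemma S5: "eqm n (\<Sum>k\<le>n. \<Sum>m\<le>n. W k m) (\<Sum>s\<le>n. XX^tri s)"
proof -
  have "eqm n (\<Sum>k\<le>n. \<Sum>m\<le>n. W k m) (\<Sum>k\<le>n. \<Sum>m\<le>n-k. W k m)"
  proof (rule eqm_sum)
    fix k assume "k \<in> {..n}"
    show "eqm n (\<Sum>m\<le>n. W k m) (\<Sum>m\<le>n-k. W k m)"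
    proof (rule eqm_sum_drop_gen, simp, intro allI impI)
      fix m assume "n - k < m \<and> m \<le> n"
      then have "n < 2*tri k + k*m + tri m" using tri_ge[of k] tri_ge[of m] by linarith
      then show "eqm n (W k m) 0" unfolding W_def by (rule eqm_Xpow)
    qed
  qed
  also have "(\<Sum>k\<le>n. \<Sum>m\<le>n-k. W k m) = (\<Sum>(k,m)\<in>{(i,j). i+j \<le> n}. W k m)"
  proof -
    have "(\<Sum>k\<le>n. \<Sum>m\<le>n-k. W k m) = (\<Sum>(k,m)\<in>Sigma {..n} (\<lambda>k. {..n-k}). W k m)"
      by (rule sum.Sigma) auto
    also have "Sigma {..n} (\<lambda>k. {..n-k}) = {(i,j). i+j \<le> n}" by auto
    finally show ?thesis .
  qed
  also have "\<dots> = (\<Sum>s\<le>n. \<Sum>k\<le>s. W k (s - k))"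
    by (rule sum.triangle_reindex_eq)
  also have "\<dots> = (\<Sum>s\<le>n. XX^tri s)"
  proof (rule sum.cong)
    fix s assume "s \<in> {..n}"
    have "(\<Sum>k\<le>s. W k (s - k)) = (\<Sum>k\<le>s. XX^tri s * (XX^tri k * iP k * iP (s - k)))"
      by (rule sum.cong) (simp_all add: W_diag)
    also have "\<dots> = XX^tri s" by (simp add: sum_distrib_left[symmetric] Dlem)
    finally show "(\<Sum>k\<le>s. W k (s - k)) = XX^tri s" .
  qed simp
  finally show ?thesis .
qed

lemma tri_sum_coeff: "(\<Sum>s\<le>n. XX^tri s) $ n = (if \<exists>s. n = tri s then 1 else 0)"
proof (cases "\<exists>s. n = tri s")
  case True
  then obtain s0 where s0: "n = tri s0" by blast
  have "s0 \<le> n" using s0 tri_ge[of s0] by simp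
  have "(\<Sum>s\<le>n. XX^tri s) $ n = (\<Sum>s\<le>n. if s = s0 then 1 else 0)"
    unfolding fps_sum_nth by (rule sum.cong) (auto simp: s0 tri_inj)
  also have "\<dots> = 1" using \<open>s0 \<le> n\<close> by simp
  finally show ?thesis using True by simp
next
  case False
  then show ?thesis unfolding fps_sum_nth by (auto intro!: sum.neutral)
qed

lemma main_coeff: "2*n \<le> N \<Longrightarrow> Fsum n N $ n = (if \<exists>s. n = tri s then 1 else 0)"
proof -
  assume h: "2*n \<le> N"
  have "eqm n (Fsum n N) (\<Sum>s\<le>n. XX^tri s)"
    unfolding S2[OF h] using S34[OF h] S5 by (rule eqm_trans)
  then have "Fsum n N $ n = (\<Sum>s\<le>n. XX^tri s) $ n" by (simp add: eqm_def)
  then show ?thesis by (simp add: tri_sum_coeff)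
qed




definition G :: "nat \<Rightarrow> nat set \<Rightarrow> bit fps" where
  "G i A = Abs_fps (\<lambda>m. if i dvd m \<and> m div i \<in> A then 1 else 0)"

definition MS :: "nat set \<Rightarrow> (nat \<Rightarrow> nat set) \<Rightarrow> nat \<Rightarrow> nat multiset set" where
  "MS S A n = {p. set_mset p \<subseteq> S \<and> (\<forall>i\<in>S. count p i \<in> A i) \<and> sum_mset p = n}"

lemma size_le_sum: "(\<forall>x\<in>#p. 0 < x) \<Longrightarrow> size p \<le> sum_mset (p :: nat multiset)"
  by (induct p) auto

lemma count_le_sum: "count p x * x \<le> sum_mset (p :: nat multiset)"
  by (induct p) auto

lemma finite_msets: "finite S \<Longrightarrow> finite {p. set_mset p \<subseteq> S \<and> size p \<le> n}"
proof -
  assume fS: "finite S"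
  have "{p. set_mset p \<subseteq> S \<and> size p \<le> n} \<subseteq> mset ` {xs. set xs \<subseteq> S \<and> length xs \<le> n}"
  proof
    fix p assume "p \<in> {p. set_mset p \<subseteq> S \<and> size p \<le> n}"
    moreover obtain xs where "mset xs = p" using ex_mset by blast
    ultimately show "p \<in> mset ` {xs. set xs \<subseteq> S \<and> length xs \<le> n}" by auto
  qed
  then show ?thesis using finite_subset finite_lists_length_le[OF fS] by blast
qed

lemma finite_MS: "finite S \<Longrightarrow> 0 \<notin> S \<Longrightarrow> finite (MS S A n)"
proof -
  assume fS: "finite S" and z: "0 \<notin> S"
  have "MS S A n \<subseteq> {p. set_mset p \<subseteq> S \<and> size p \<le> n}"
  proof
    fix p assume p: "p \<in> MS S A n"
    have "\<forall>x\<in>#p. 0 < x"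
    proof
      fix x assume "x \<in># p"
      then have "x \<in> S" using p by (auto simp: MS_def)
      then show "0 < x" using z by (cases x) auto
    qed
    then have "size p \<le> n" using size_le_sum[of p] p by (simp add: MS_def)
    then show "p \<in> {p. set_mset p \<subseteq> S \<and> size p \<le> n}" using p by (simp add: MS_def)
  qed
  then show ?thesis using finite_subset finite_msets[OF fS] by blast
qed

lemma MS_empty: "MS {} A n = (if n = 0 then {{#}} else {})"
  by (auto simp: MS_def)

lemma MS_insert:
  assumes "s \<notin> S" "0 < s"
  shows "MS (insert s S) A n = (\<Union>a\<in>{a. a \<in> A s \<and> a*s \<le> n}. (\<lambda>q. q + replicate_mset a s) ` MS S A (n - a*s))"
proof (intro equalityI subsetI)
  fix p assume p: "p \<in> MS (insert s S) A n"
  define a where "a = count p s"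
  define q where "q = {#x \<in># p. x \<noteq> s#}"
  have pq: "p = q + replicate_mset a s"
    unfolding q_def a_def filter_eq_replicate_mset[symmetric]
    using multiset_partition[of p "\<lambda>x. x \<noteq> s"] by (simp add: add.commute)
  have sum: "sum_mset p = sum_mset q + a * s" using pq by simp
  have pn: "sum_mset p = n" using p by (simp add: MS_def)
  have "a \<in> A s" using p by (simp add: MS_def a_def)
  moreover have "a*s \<le> n" using pn sum by simp
  moreover have "q \<in> MS S A (n - a*s)"
  proof -
    have "set_mset q \<subseteq> S" using p unfolding q_def MS_def by auto
    moreover have "\<forall>i\<in>S. count q i \<in> A i"
      using p assms(1) unfolding q_def MS_def by auto
    moreover have "sum_mset q = n - a*s" using pn sum by simp
    ultimately show ?thesis by (simp add: MS_def)
  qed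
  ultimately show "p \<in> (\<Union>a\<in>{a. a \<in> A s \<and> a*s \<le> n}. (\<lambda>q. q + replicate_mset a s) ` MS S A (n - a*s))"
    using pq by blast
next
  fix p assume "p \<in> (\<Union>a\<in>{a. a \<in> A s \<and> a*s \<le> n}. (\<lambda>q. q + replicate_mset a s) ` MS S A (n - a*s))"
  then obtain a q where a: "a \<in> A s" "a*s \<le> n" and q: "q \<in> MS S A (n - a*s)"
    and pq: "p = q + replicate_mset a s" by blast
  have cqs: "count q s = 0" using q assms(1) unfolding MS_def by (auto simp: count_eq_zero_iff)
  have "set_mset p \<subseteq> insert s S" using q pq unfolding MS_def by (auto split: if_splits)
  moreover have "\<forall>i\<in>insert s S. count p i \<in> A i"
  proof
    fix i assume "i \<in> insert s S"
    then show "count p i \<in> A i"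
    proof
      assume "i = s" then show ?thesis using pq cqs a by simp
    next
      assume "i \<in> S" then show ?thesis using pq q assms(1) unfolding MS_def by auto
    qed
  qed
  moreover have "sum_mset p = n" using pq q a unfolding MS_def by simp
  ultimately show "p \<in> MS (insert s S) A n" by (simp add: MS_def)
qed




lemma bridge:
  "finite S \<Longrightarrow> 0 \<notin> S \<Longrightarrow> of_nat (card (MS S A n)) = (\<Prod>i\<in>S. G i (A i)) $ n"
proof (induct S arbitrary: n rule: finite_induct)
  case empty then show ?case by (simp add: MS_empty)
next
  case (insert s S)
  have s0: "0 < s" using insert by auto
  have z: "0 \<notin> S" using insert by auto
  let ?I = "{a. a \<in> A s \<and> a*s \<le> n}"
  have fI: "finite ?I"
  proof (rule finite_subset)
    show "?I \<subseteq> {..n}"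
    proof
      fix a assume "a \<in> ?I"
      then have h1: "a*s \<le> n" by simp
      have h2: "a \<le> a*s" using s0 by simp
      from h2 h1 have "a \<le> n" by (rule le_trans)
      then show "a \<in> {..n}" by simp
    qed
  qed simp
  have "card (MS (insert s S) A n) = (\<Sum>a\<in>?I. card ((\<lambda>q. q + replicate_mset a s) ` MS S A (n - a*s)))"
    unfolding MS_insert[OF insert(2) s0]
  proof (rule card_UN_disjoint[OF fI])
    show "\<forall>i::nat\<in>?I. finite ((\<lambda>q. q + replicate_mset i s) ` MS S A (n - i*s))"
      using finite_MS[OF insert(1) z] by blast
    show "\<forall>i::nat\<in>?I. \<forall>j::nat\<in>?I. i \<noteq> j \<longrightarrow> (\<lambda>q. q + replicate_mset i s) ` MS S A (n - i*s) \<inter> (\<lambda>q. q + replicate_mset j s) ` MS S A (n - j*s) = {}"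
    proof (intro ballI impI)
      fix i j :: nat assume "i \<noteq> j"
      show "(\<lambda>q. q + replicate_mset i s) ` MS S A (n - i*s) \<inter> (\<lambda>q. q + replicate_mset j s) ` MS S A (n - j*s) = {}"
      proof (rule ccontr)
        assume "\<not> ?thesis"
        then obtain q1 q2 where q1: "q1 \<in> MS S A (n - i*s)" and q2: "q2 \<in> MS S A (n - j*s)"
          and eq: "q1 + replicate_mset i s = q2 + replicate_mset j s" by blast
        have "count q1 s = 0" "count q2 s = 0" using q1 q2 insert(2) unfolding MS_def
          by (auto simp: count_eq_zero_iff)
        then have "i = j" using arg_cong[OF eq, of "\<lambda>p. count p s"] by simp
        then show False using \<open>i \<noteq> j\<close> by simp
      qed
    qed
  qed
  also have "\<dots> = (\<Sum>a\<in>?I. card (MS S A (n - a*s)))"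
    by (rule sum.cong[OF refl], rule card_image, rule inj_onI, simp)
  finally have lhs: "of_nat (card (MS (insert s S) A n)) = (\<Sum>a\<in>?I. (\<Prod>i\<in>S. G i (A i)) $ (n - a*s))"
    using insert(3)[OF z] by simp
  have "(\<Prod>i\<in>insert s S. G i (A i)) $ n = (G s (A s) * (\<Prod>i\<in>S. G i (A i))) $ n"
    using insert by simp
  also have "\<dots> = (\<Sum>k=0..n. (if s dvd k \<and> k div s \<in> A s then 1 else 0) * (\<Prod>i\<in>S. G i (A i)) $ (n - k))"
    by (simp add: fps_mult_nth G_def)
  also have "\<dots> = (\<Sum>k\<in>{k\<in>{0..n}. s dvd k \<and> k div s \<in> A s}. (\<Prod>i\<in>S. G i (A i)) $ (n - k))"
    unfolding sum.inter_filter[OF finite_atLeastAtMost] by (rule sum.cong) simp_all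
  also have "{k\<in>{0..n}. s dvd k \<and> k div s \<in> A s} = (\<lambda>a. a*s) ` ?I"
      proof (intro equalityI subsetI)
    fix k assume "k \<in> {k\<in>{0..n}. s dvd k \<and> k div s \<in> A s}"
    then obtain c where "k = s * c" "c \<in> A s" "s*c \<le> n" using s0 by (auto elim!: dvdE)
    then show "k \<in> (\<lambda>a. a*s) ` ?I" by (auto simp: mult.commute)
  next
    fix k assume "k \<in> (\<lambda>a. a*s) ` ?I"
    then obtain a where "k = a * s" "a \<in> A s" "a*s \<le> n" by auto
    then show "k \<in> {k\<in>{0..n}. s dvd k \<and> k div s \<in> A s}" using s0 by auto
  qed
  also have "(\<Sum>k\<in>(\<lambda>a. a*s) ` ?I. (\<Prod>i\<in>S. G i (A i)) $ (n - k)) = (\<Sum>a\<in>?I. (\<Prod>i\<in>S. G i (A i)) $ (n - a*s))"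
    using s0 by (subst sum.reindex) (auto intro!: inj_onI)
  finally show ?case using lhs by simp
qed




lemma G01: "0 < i \<Longrightarrow> G i {0,1} = 1 + XX^i"
proof (rule fps_ext)
  fix m assume i: "0 < i"
  show "G i {0,1} $ m = (1 + XX^i) $ m"
  proof (cases "m = 0 \<or> m = i")
    case True then show ?thesis using i by (auto simp: G_def)
  next
    case False
    have "\<not> (i dvd m \<and> m div i \<in> {0,1})"
    proof
      assume "i dvd m \<and> m div i \<in> {0,1}"
      then obtain c where "m = i * c" "c \<in> {0,1}" using i by (auto elim!: dvdE)
      then show False using False by auto
    qed
    then show ?thesis using False by (auto simp: G_def)
  qed
qed

lemma GU_mult: "0 < i \<Longrightarrow> (1 + XX^i) * G i UNIV = 1"
proof (rule fps_ext)
  fix m assume i: "0 < i"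
  have "((1 + XX^i) * G i UNIV) $ m = G i UNIV $ m + (XX^i * G i UNIV) $ m"
    by (simp add: distrib_right)
  also have "\<dots> = (if i dvd m then 1 else 0) + (if m < i then 0 else (if i dvd (m - i) then 1 else 0))"
    unfolding fps_X_power_mult_nth by (simp add: G_def)
  also have "\<dots> = (1::bit fps) $ m"
  proof (cases "m < i")
    case True
    then have "i dvd m \<longleftrightarrow> m = 0" using i by (auto dest: dvd_imp_le)
    then show ?thesis using True by simp
  next
    case False
    then have "i dvd (m - i) \<longleftrightarrow> i dvd m" using dvd_minus_self by (metis le_less_linear)
    then show ?thesis using False i by simp
  qed
  finally show "((1 + XX^i) * G i UNIV) $ m = (1::bit fps) $ m" .
qed

lemma GU: "0 < i \<Longrightarrow> G i UNIV = inverse (1 + XX^i)"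
  by (rule fps_inverse_unique[symmetric]) (rule GU_mult)

lemma G2: "0 < i \<Longrightarrow> G i {a. 2 \<le> a} = XX^(2*i) * G i UNIV"
proof (rule fps_ext)
  fix m assume i: "0 < i"
  show "G i {a. 2 \<le> a} $ m = (XX^(2*i) * G i UNIV) $ m"
  proof (cases "m < 2*i")
    case True
    have "\<not> (i dvd m \<and> 2 \<le> m div i)"
    proof
      assume "i dvd m \<and> 2 \<le> m div i"
      then obtain c where "m = i * c" "2 \<le> c" using i by (auto elim!: dvdE)
      then have "2*i \<le> m" by simp
      then show False using True by simp
    qed
    then show ?thesis using True unfolding fps_X_power_mult_nth by (simp add: G_def)
  next
    case False
    have "i dvd m \<and> 2 \<le> m div i \<longleftrightarrow> i dvd (m - 2*i)"
    proof
      assume "i dvd (m - 2*i)"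
      then obtain c where c: "m - 2*i = i * c" by (auto elim!: dvdE)
      then have "m = i * (c + 2)" using False by (simp add: algebra_simps)
      then show "i dvd m \<and> 2 \<le> m div i" using i by simp
    next
      assume "i dvd m \<and> 2 \<le> m div i"
      then obtain c where c: "m = i * c" using i by (auto elim!: dvdE)
      then have "m - 2*i = i * (c - 2)" by (simp add: algebra_simps diff_mult_distrib2)
      then show "i dvd (m - 2*i)" by simp
    qed
    then show ?thesis using False unfolding fps_X_power_mult_nth by (simp add: G_def)
  qed
qed

lemma sum_2i: "(\<Sum>i\<in>{1..k}. 2*i) = 2 * tri k"
  by (induct k) (simp_all add: tri_Suc)

definition Aj :: "nat \<Rightarrow> nat \<Rightarrow> nat set" where
  "Aj j i = (if i < 2*j then {a. 2 \<le> a} else if i = 2*j then UNIV else {0,1})"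

lemma prodD: "(\<Prod>i\<in>{1..N}. G i {0,1}) = P N"
  unfolding P_def by (rule prod.cong[OF refl]) (rule G01, simp)

lemma prodB:
  assumes "2*i+2 \<le> N"
  shows "(\<Prod>l\<in>{1..N}. G l (Aj (Suc i) l)) = XX^(2 * tri (2*i+1)) * tail N (2*i+2) * iP (2*i+2)"
proof -
  let ?f = "\<lambda>l. G l (Aj (Suc i) l)"
  have split: "{1..N} = {1..2*i+2} \<union> {Suc (2*i+2)..N}" using assms by auto
  have "(\<Prod>l\<in>{1..N}. ?f l) = (\<Prod>l\<in>{1..2*i+2}. ?f l) * (\<Prod>l\<in>{Suc (2*i+2)..N}. ?f l)"
    unfolding split by (rule prod.union_disjoint) auto
  also have "(\<Prod>l\<in>{Suc (2*i+2)..N}. ?f l) = tail N (2*i+2)"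
    unfolding tail_def by (rule prod.cong[OF refl]) (simp add: Aj_def G01[symmetric])
  also have "(\<Prod>l\<in>{1..2*i+2}. ?f l) = (\<Prod>l\<in>{1..2*i+1}. ?f l) * ?f (2*i+2)"
    by (simp add: Aj_def)
  also have "?f (2*i+2) = inverse (1 + XX^(2*i+2))"
    by (simp add: Aj_def GU)
  also have "(\<Prod>l\<in>{1..2*i+1}. ?f l) = (\<Prod>l\<in>{1..2*i+1}. XX^(2*l) * inverse (1 + XX^l))"
    by (rule prod.cong[OF refl]) (auto simp: Aj_def G2 GU)
  also have "\<dots> = XX^(\<Sum>l\<in>{1..2*i+1}. 2*l) * inverse (P (2*i+1))"
    by (simp only: prod.distrib power_sum[symmetric] inverse_prod_fps[symmetric] P_def)
  also have "\<dots> = XX^(2 * tri (2*i+1)) * iP (2*i+1)"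
    by (simp only: sum_2i iP_def)
  finally show ?thesis
    using iP_Suc[of "2*i+1"] by (simp add: mult_ac)
qed




lemma part_sub: "is_partition n p \<Longrightarrow> set_mset p \<subseteq> {1..n}"
proof
  fix x assume p: "is_partition n p" and x: "x \<in># p"
  then have "0 < x" by (simp add: is_partition_def)
  moreover have h1: "x \<le> count p x * x" using x by (simp add: Suc_le_eq)
  have "sum_mset p = n" using p by (simp add: is_partition_def)
  then have "x \<le> n" using count_le_sum[of p x] h1 by linarith
  ultimately show "x \<in> {1..n}" by simp
qed

lemma MS_iff: "p \<in> MS {1..N} A n \<longleftrightarrow> is_partition n p \<and> set_mset p \<subseteq> {1..N} \<and> (\<forall>i\<in>{1..N}. count p i \<in> A i)"
  unfolding MS_def is_partition_def by auto

lemma count_out: "set_mset p \<subseteq> {1..N} \<Longrightarrow> x \<notin> {1..N} \<Longrightarrow> count p x = 0"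
  by (auto simp: count_eq_zero_iff)

lemma Dset: "n \<le> N \<Longrightarrow> {p \<in> partitions n. distinct_parts p} = MS {1..N} (\<lambda>_. {0,1}) n"
proof (intro equalityI subsetI)
  fix p assume nN: "n \<le> N" and "p \<in> {p \<in> partitions n. distinct_parts p}"
  then have p: "is_partition n p" "\<forall>x. count p x \<le> 1"
    by (auto simp: partitions_def distinct_parts_def)
  have "set_mset p \<subseteq> {1..N}" using part_sub[OF p(1)] nN by auto
  moreover have "\<forall>i\<in>{1..N}. count p i \<in> {0,1}" using p(2) by (auto simp: le_Suc_eq)
  ultimately show "p \<in> MS {1..N} (\<lambda>_. {0,1}) n" using p(1) unfolding MS_iff by blast
next
  fix p assume "p \<in> MS {1..N} (\<lambda>_. {0,1}) n"
  then have p: "is_partition n p" "set_mset p \<subseteq> {1..N}" "\<forall>i\<in>{1..N}. count p i \<in> {0,1}"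
    unfolding MS_iff by blast+
  have "\<forall>x. count p x \<le> 1"
  proof
    fix x show "count p x \<le> 1"
    proof (cases "x \<in> {1..N}")
      case True then have "count p x \<in> {0,1}" using p(3) by blast
      then show ?thesis by auto
    next
      case False then show ?thesis using count_out[OF p(2), of x] by simp
    qed
  qed
  then show "p \<in> {p \<in> partitions n. distinct_parts p}" using p(1)
    by (simp add: partitions_def distinct_parts_def)
qed

definition condj :: "nat \<Rightarrow> nat multiset \<Rightarrow> bool" where
  "condj j p \<longleftrightarrow> (\<forall>i. 1 \<le> i \<and> i \<le> 2*j - 1 \<longrightarrow> count p i \<ge> 2) \<and> (\<forall>i. i > 2*j \<longrightarrow> count p i \<le> 1)"

lemma cond_b_iff: "cond_b p \<longleftrightarrow> (\<exists>j\<ge>1. condj j p)"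
  unfolding cond_b_def condj_def by blast

lemma Bset:
  assumes "n \<le> N" "2*j \<le> N" "1 \<le> j"
  shows "{p \<in> partitions n. condj j p} = MS {1..N} (Aj j) n"
proof (intro equalityI subsetI)
  fix p assume "p \<in> {p \<in> partitions n. condj j p}"
  then have p: "is_partition n p" "condj j p" by (auto simp: partitions_def)
  have "set_mset p \<subseteq> {1..N}" using part_sub[OF p(1)] assms by auto
  moreover have "\<forall>i\<in>{1..N}. count p i \<in> Aj j i"
  proof
    fix i assume i: "i \<in> {1..N}"
    show "count p i \<in> Aj j i"
    proof (cases "i < 2*j")
      case True then show ?thesis using p(2) i unfolding condj_def Aj_def by auto
    next
      case False
      then show ?thesis using p(2) i unfolding condj_def Aj_def by (auto simp: le_Suc_eq)
    qed
  qed
  ultimately show "p \<in> MS {1..N} (Aj j) n" using p(1) unfolding MS_iff by blast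
next
  fix p assume "p \<in> MS {1..N} (Aj j) n"
  then have p: "is_partition n p" "set_mset p \<subseteq> {1..N}" "\<forall>i\<in>{1..N}. count p i \<in> Aj j i"
    unfolding MS_iff by blast+
  have "condj j p" unfolding condj_def
  proof (intro conjI allI impI)
    fix i assume "1 \<le> i \<and> i \<le> 2*j - 1"
    then have i1: "i \<in> {1..N}" and i2: "i < 2*j" using assms by auto
    from i1 have "count p i \<in> Aj j i" using p(3) by blast
    then show "2 \<le> count p i" using i2 by (simp add: Aj_def)
  next
    fix i assume i: "2*j < i"
    show "count p i \<le> 1"
    proof (cases "i \<in> {1..N}")
      case True then have "count p i \<in> Aj j i" using p(3) by blast
      then show ?thesis using i by (auto simp: Aj_def)
    next
      case False then show ?thesis using count_out[OF p(2)] by simp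
    qed
  qed
  then show "p \<in> {p \<in> partitions n. condj j p}" using p(1) by (simp add: partitions_def)
qed

lemma condj_bound: "is_partition n p \<Longrightarrow> condj j p \<Longrightarrow> 1 \<le> j \<Longrightarrow> j \<le> n"
proof -
  assume p: "is_partition n p" and c: "condj j p" and j: "1 \<le> j"
  have "2 \<le> count p (2*j - 1)" using c j unfolding condj_def by auto
  then have "2 * (2*j - 1) \<le> count p (2*j - 1) * (2*j - 1)" by (rule mult_right_mono) simp
  also have "\<dots> \<le> n" using count_le_sum[of p "2*j - 1"] p by (simp add: is_partition_def)
  finally show "j \<le> n" using j by linarith
qed

lemma c1_set:
  "{p \<in> partitions n. distinct_parts p \<or> cond_b p} =
     {p \<in> partitions n. distinct_parts p} \<union> (\<Union>i\<in>{..<n}. {p \<in> partitions n. condj (Suc i) p})"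
proof (intro equalityI subsetI)
  fix p assume "p \<in> {p \<in> partitions n. distinct_parts p \<or> cond_b p}"
  then have p: "is_partition n p" "distinct_parts p \<or> cond_b p" by (auto simp: partitions_def)
  show "p \<in> {p \<in> partitions n. distinct_parts p} \<union> (\<Union>i\<in>{..<n}. {p \<in> partitions n. condj (Suc i) p})"
  proof (cases "distinct_parts p")
    case True then show ?thesis using p by (simp add: partitions_def)
  next
    case False
    then obtain j where j: "1 \<le> j" "condj j p" using p(2) cond_b_iff by blast
    then have "j \<le> n" using condj_bound p(1) by blast
    then have "j - 1 \<in> {..<n}" "Suc (j - 1) = j" using j by auto
    then have "p \<in> {p \<in> partitions n. condj (Suc (j - 1)) p}" using p j by (simp add: partitions_def)
    then show ?thesis using \<open>j - 1 \<in> {..<n}\<close> by blast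
  qed
next
  fix p assume "p \<in> {p \<in> partitions n. distinct_parts p} \<union> (\<Union>i\<in>{..<n}. {p \<in> partitions n. condj (Suc i) p})"
  then show "p \<in> {p \<in> partitions n. distinct_parts p \<or> cond_b p}"
    using cond_b_iff by (auto simp: partitions_def)
qed

lemma of_nat_bit: "(of_nat m :: bit) = (if odd m then 1 else 0)"
  by (induct m) auto


lemma condj_disj: "condj j p \<Longrightarrow> condj j' p \<Longrightarrow> j < j' \<Longrightarrow> False"
proof -
  assume c: "condj j p" "condj j' p" and jj: "j < j'"
  have "2 \<le> count p (2*j+1)" using c(2) jj unfolding condj_def by auto
  moreover have "count p (2*j+1) \<le> 1" using c(1) unfolding condj_def by auto
  ultimately show False by simp
qed

lemma c1_bit: "(of_nat (c1 n) :: bit) = Fsum n (2*n) $ n"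
proof -
  define N where "N = 2*n"
  let ?D = "{p \<in> partitions n. distinct_parts p}"
  let ?B = "\<lambda>i. {p \<in> partitions n. condj (Suc i) p}"
  have D: "?D = MS {1..N} (\<lambda>_. {0,1}) n" by (rule Dset) (simp add: N_def)
  have B: "?B i = MS {1..N} (Aj (Suc i)) n" if "i < n" for i
    by (rule Bset) (use that in \<open>auto simp: N_def\<close>)
  have fD: "finite ?D" unfolding D by (rule finite_MS) auto
  have fB: "finite (?B i)" if "i < n" for i unfolding B[OF that] by (rule finite_MS) auto
  have disj1: "?D \<inter> (\<Union>i\<in>{..<n}. ?B i) = {}"
  proof (rule ccontr)
    assume "?D \<inter> (\<Union>i\<in>{..<n}. ?B i) \<noteq> {}"
    then obtain p i where "distinct_parts p" "condj (Suc i) p" by blast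
    then have "count p 1 \<le> 1" "2 \<le> count p 1" unfolding distinct_parts_def condj_def by auto
    then show False by simp
  qed
  have card_eq: "card (\<Union>i\<in>{..<n}. ?B i) = (\<Sum>i<n. card (?B i))"
  proof (rule card_UN_disjoint)
    show "\<forall>i::nat\<in>{..<n}. \<forall>j::nat\<in>{..<n}. i \<noteq> j \<longrightarrow> ?B i \<inter> ?B j = {}"
    proof (intro ballI impI)
      fix i j :: nat assume "i \<noteq> j"
      show "?B i \<inter> ?B j = {}"
      proof (rule ccontr)
        assume "?B i \<inter> ?B j \<noteq> {}"
        then obtain p where "condj (Suc i) p" "condj (Suc j) p" by blast
        then show False using \<open>i \<noteq> j\<close> condj_disj by (metis Suc_less_eq nat_neq_iff)
      qed
    qed
  qed (use fB in auto)
  have "c1 n = card ?D + (\<Sum>i<n. card (?B i))"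
    unfolding c1_def c1_set
    by (subst card_Un_disjoint) (use fD fB disj1 card_eq in auto)
  then have "(of_nat (c1 n) :: bit) = of_nat (card ?D) + (\<Sum>i<n. of_nat (card (?B i)))"
    by simp
  also have "of_nat (card ?D) = P N $ n"
    unfolding D using bridge[of "{1..N}" "\<lambda>_. {0,1}" n] prodD[of N] by simp
  also have "(\<Sum>i<n. (of_nat (card (?B i)) :: bit)) = (\<Sum>i<n. (XX^(2 * tri (2*i+1)) * tail N (2*i+2) * iP (2*i+2)) $ n)"
  proof (rule sum.cong[OF refl])
    fix i assume "i \<in> {..<n}"
    then have i: "i < n" by simp
    have "(of_nat (card (?B i)) :: bit) = (\<Prod>l\<in>{1..N}. G l (Aj (Suc i) l)) $ n"
      unfolding B[OF i] by (rule bridge) auto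
    also have "\<dots> = (XX^(2 * tri (2*i+1)) * tail N (2*i+2) * iP (2*i+2)) $ n"
      using i by (subst prodB) (auto simp: N_def)
    finally show "(of_nat (card (?B i)) :: bit) = (XX^(2 * tri (2*i+1)) * tail N (2*i+2) * iP (2*i+2)) $ n" .
  qed
  also have "P N $ n + (\<Sum>i<n. (XX^(2 * tri (2*i+1)) * tail N (2*i+2) * iP (2*i+2)) $ n) = Fsum n N $ n"
    by (simp add: Fsum_def fps_sum_nth)
  finally show ?thesis by (simp add: N_def)
qed

theorem theorem1:
  fixes n :: nat
  shows "odd (c1 n) \<longleftrightarrow> (\<exists>j::nat. n = j * (j + 1) div 2)"
proof -
  have "(if odd (c1 n) then 1 else 0 :: bit) = (if \<exists>s. n = tri s then 1 else 0)"
    using c1_bit[of n] main_coeff[of n "2*n"] of_nat_bit[of "c1 n"] by simp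
  then have "odd (c1 n) \<longleftrightarrow> (\<exists>s. n = tri s)"
    by (auto split: if_splits)
  then show ?thesis by (simp add: tri_def)
qed


end
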